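(* Let $\Lambda,\Gamma$ be finite simplicial graphs with complement graphs $\Lambda^c,\Gamma^c$, and suppose there is a surjective and locally surjective graph morphism $\Lambda^c\to\Gamma^c$. Then $C(\Gamma)$ is quasi-isometrically embedded in $C(\Lambda)$ (i.e. there is an injective homomorphism $C(\Gamma)\hookrightarrow C(\Lambda)$ which is a quasi-isometric embedding for the word metrics of the vertex generating sets).
   Context: The complement graph $\Gamma^c$ has vertex set $V(\Gamma)$, with two distinct vertices adjacent in $\Gamma^c$ iff they are not adjacent in $\Gamma$. A graph morphism $g\colon X\to Y$ is a map $V(X)\to V(Y)$ sending each pair of adjacent vertices to a pair of adjacent vertices. It is locally surjective if for every vertex $v$ of $X$ and every edge $e$ of $Y$ incident to $g(v)$ there is an edge $\tilde e$ of $X$ incident to $v$ with $g(\tilde e)=e$. The right-angled Coxeter group is $C(\Gamma)=\langle V(\Gamma)\mid v^2=1,\ [u,v]=1\text{ iff }\{u,v\}\in E(\Gamma)\rangle$. *)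

theory Defs
  imports Complex_Main "HOL-Algebra.Group"
begin

type_synonym 'a graph = "'a set \<times> 'a set set"

definition verts :: "'a graph \<Rightarrow> 'a set" where "verts G = fst G"
definition edges :: "'a graph \<Rightarrow> 'a set set" where "edges G = snd G"

definition finite_simple_graph :: "'a graph \<Rightarrow> bool" where
  "finite_simple_graph G \<longleftrightarrow> finite (verts G) \<and>
     edges G \<subseteq> {{u, v} | u v. u \<in> verts G \<and> v \<in> verts G \<and> u \<noteq> v}"

definition complement_graph :: "'a graph \<Rightarrow> 'a graph" where
  "complement_graph G = (verts G,
     {{u, v} | u v. u \<in> verts G \<and> v \<in> verts G \<and> u \<noteq> v \<and> {u, v} \<notin> edges G})"

definition graph_morphism :: "('a \<Rightarrow> 'b) \<Rightarrow> 'a graph \<Rightarrow> 'b graph \<Rightarrow> bool" where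
  "graph_morphism g X Y \<longleftrightarrow> g ` verts X \<subseteq> verts Y \<and> (\<forall>e \<in> edges X. g ` e \<in> edges Y)"

definition locally_surjective :: "('a \<Rightarrow> 'b) \<Rightarrow> 'a graph \<Rightarrow> 'b graph \<Rightarrow> bool" where
  "locally_surjective g X Y \<longleftrightarrow>
     (\<forall>v \<in> verts X. \<forall>e \<in> edges Y. g v \<in> e \<longrightarrow> (\<exists>e' \<in> edges X. v \<in> e' \<and> g ` e' = e))"

inductive racg_eq :: "'a graph \<Rightarrow> 'a list \<Rightarrow> 'a list \<Rightarrow> bool" for G where
  refl: "set w \<subseteq> verts G \<Longrightarrow> racg_eq G w w"
| sym: "racg_eq G w w' \<Longrightarrow> racg_eq G w' w"
| trans: "racg_eq G w w' \<Longrightarrow> racg_eq G w' w'' \<Longrightarrow> racg_eq G w w''"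
| cancel: "set xs \<subseteq> verts G \<Longrightarrow> set ys \<subseteq> verts G \<Longrightarrow> v \<in> verts G \<Longrightarrow>
     racg_eq G (xs @ [v, v] @ ys) (xs @ ys)"
| commute: "set xs \<subseteq> verts G \<Longrightarrow> set ys \<subseteq> verts G \<Longrightarrow> {u, v} \<in> edges G \<Longrightarrow>
     racg_eq G (xs @ [u, v] @ ys) (xs @ [v, u] @ ys)"

definition racg_class :: "'a graph \<Rightarrow> 'a list \<Rightarrow> 'a list set" where
  "racg_class G w = {w'. racg_eq G w w'}"

definition RACG :: "'a graph \<Rightarrow> 'a list set monoid" where
  "RACG G = \<lparr> carrier = racg_class G ` {w. set w \<subseteq> verts G},
              mult = (\<lambda>X Y. racg_class G ((SOME x. x \<in> X) @ (SOME y. y \<in> Y))),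
              one = racg_class G [] \<rparr>"

definition word_dist :: "'a graph \<Rightarrow> 'a list set \<Rightarrow> 'a list set \<Rightarrow> nat" where
  "word_dist G g h = (LEAST n. \<exists>w. set w \<subseteq> verts G \<and> length w = n \<and>
                                   g \<otimes>\<^bsub>RACG G\<^esub> racg_class G w = h)"

definition qi_embedding :: "'a graph \<Rightarrow> 'b graph \<Rightarrow> ('a list set \<Rightarrow> 'b list set) \<Rightarrow> bool" where
  "qi_embedding G L f \<longleftrightarrow> (\<exists>K C :: real. K \<ge> 1 \<and> C \<ge> 0 \<and>
     (\<forall>g \<in> carrier (RACG G). \<forall>h \<in> carrier (RACG G).
        real (word_dist G g h) / K - C \<le> real (word_dist L (f g) (f h)) \<and>
        real (word_dist L (f g) (f h)) \<le> K * real (word_dist G g h) + C))"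

end

theory Submission
  imports Defs
begin


definition E :: "'a graph \<Rightarrow> 'a \<Rightarrow> 'a \<Rightarrow> bool" where
  "E G a b \<longleftrightarrow> {a,b} \<in> edges G \<and> a \<noteq> b"

lemma E_sym: "E G a b \<Longrightarrow> E G b a" by (auto simp: E_def insert_commute)

definition comm :: "'a graph \<Rightarrow> 'a \<Rightarrow> 'a list \<Rightarrow> bool" where
  "comm G s q \<longleftrightarrow> (\<forall>c\<in>set q. E G s c)"

lemma comm_notin: "comm G s q \<Longrightarrow> s \<notin> set q" by (auto simp: comm_def E_def)
lemma comm_append[simp]: "comm G s (p @ q) = (comm G s p \<and> comm G s q)" by (auto simp: comm_def)
lemma comm_Cons[simp]: "comm G s (c # q) = (E G s c \<and> comm G s q)" by (auto simp: comm_def)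
lemma comm_Nil[simp]: "comm G s []" by (auto simp: comm_def)

fun movr :: "'a graph \<Rightarrow> 'a \<Rightarrow> 'a list \<Rightarrow> bool" where
  "movr G s [] = False"
| "movr G s (c # w) = (c = s \<or> (E G s c \<and> movr G s w))"

definition mov :: "'a graph \<Rightarrow> 'a \<Rightarrow> 'a list \<Rightarrow> bool" where "mov G s w = movr G s (rev w)"

lemma mov_Nil[simp]: "\<not> mov G s []" by (simp add: mov_def)
lemma mov_snoc[simp]: "mov G s (w @ [c]) = (c = s \<or> (E G s c \<and> mov G s w))" by (simp add: mov_def)

lemma mov_append: "mov G s (p @ q) = (mov G s q \<or> (comm G s q \<and> mov G s p))"
proof (induction q rule: rev_induct)
  case Nil then show ?case by simp
next
  case (snoc c q)
  have "mov G s (p @ q @ [c]) = mov G s ((p @ q) @ [c])" by simp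
  also have "\<dots> = (c = s \<or> (E G s c \<and> mov G s (p @ q)))" by (rule mov_snoc)
  finally show ?case using snoc by auto
qed

lemma mov_in: "mov G s w \<Longrightarrow> s \<in> set w"
  by (induction w rule: rev_induct) auto

lemma mov_char: "mov G s w \<longleftrightarrow> (\<exists>p q. w = p @ [s] @ q \<and> comm G s q)"
proof
  assume "mov G s w" then show "\<exists>p q. w = p @ [s] @ q \<and> comm G s q"
  proof (induction w rule: rev_induct)
    case Nil then show ?case by simp
  next
    case (snoc c w)
    show ?case
    proof (cases "c = s")
      case True then show ?thesis by (intro exI[of _ w] exI[of _ "[]"]) auto
    next
      case False
      with snoc.prems have "E G s c" "mov G s w" by auto
      with snoc.IH obtain p q where "w = p @ [s] @ q" "comm G s q" by auto
      with \<open>E G s c\<close> show ?thesis by (intro exI[of _ p] exI[of _ "q @ [c]"]) auto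
    qed
  qed
next
  assume "\<exists>p q. w = p @ [s] @ q \<and> comm G s q"
  then obtain p q where "w = p @ [s] @ q" "comm G s q" by auto
  then show "mov G s w" using mov_append[of G s "p @ [s]" q] by simp
qed

lemma movE:
  assumes "mov G s w" obtains p q where "w = p @ [s] @ q" "comm G s q"
proof -
  have "\<exists>p q. w = p @ [s] @ q \<and> comm G s q" using assms by (simp only: mov_char)
  then show ?thesis using that by blast
qed

fun delr :: "'a \<Rightarrow> 'a list \<Rightarrow> 'a list" where
  "delr s [] = []"
| "delr s (c # w) = (if c = s then w else c # delr s w)"

lemma delr_app: "s \<notin> set x \<Longrightarrow> delr s (x @ s # y) = x @ y" by (induction x) auto
lemma set_delr: "set (delr s x) \<subseteq> set x" by (induction x) auto
lemma len_delr: "length (delr s x) \<le> length x" by (induction x) auto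

definition act :: "'a graph \<Rightarrow> 'a \<Rightarrow> 'a list \<Rightarrow> 'a list" where
  "act G s u = (if mov G s u then rev (delr s (rev u)) else u @ [s])"

lemma act_mov: "comm G s q \<Longrightarrow> act G s (p @ [s] @ q) = p @ q"
proof -
  assume c: "comm G s q"
  have m: "mov G s (p @ [s] @ q)" using mov_append[of G s "p @ [s]" q] c by simp
  have n: "s \<notin> set (rev q)" using comm_notin[OF c] by simp
  have r: "rev (p @ [s] @ q) = rev q @ s # rev p" by simp
  have "rev (delr s (rev (p @ [s] @ q))) = p @ q" unfolding r delr_app[OF n] by simp
  then show ?thesis using m unfolding act_def by simp
qed

lemma act_nmov: "\<not> mov G s u \<Longrightarrow> act G s u = u @ [s]" by (simp add: act_def)

lemma set_act: "set (act G s u) \<subseteq> insert s (set u)"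
  using set_delr[of s "rev u"] by (auto simp: act_def)

lemma len_act: "length (act G s u) \<le> Suc (length u)"
  using len_delr[of s "rev u"] by (auto simp: act_def)

fun redr :: "'a graph \<Rightarrow> 'a list \<Rightarrow> bool" where
  "redr G [] = True"
| "redr G (s # w) = (redr G w \<and> \<not> movr G s w)"

definition red :: "'a graph \<Rightarrow> 'a list \<Rightarrow> bool" where "red G w = redr G (rev w)"

lemma red_Nil[simp]: "red G []" by (simp add: red_def)
lemma red_snoc[simp]: "red G (w @ [s]) = (red G w \<and> \<not> mov G s w)" by (simp add: red_def mov_def)

lemma red_prefix: "red G (w @ r) \<Longrightarrow> red G w"
proof (induction r rule: rev_induct)
  case Nil then show ?case by simp
next
  case (snoc x r)
  then show ?case using red_snoc[of G "w @ r" x] by simp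
qed

lemma red_del: "red G (p @ [s] @ q) \<Longrightarrow> comm G s q \<Longrightarrow> red G (p @ q)"
proof (induction q rule: rev_induct)
  case Nil then show ?case using red_prefix[of G p "[s]"] by simp
next
  case (snoc c q)
  have h: "red G ((p @ [s] @ q) @ [c])" using snoc.prems(1) by simp
  have r1: "red G (p @ [s] @ q)" and m1: "\<not> mov G c (p @ [s] @ q)"
    using h unfolding red_snoc by auto
  have cs: "comm G s q" "E G s c" using snoc.prems(2) by auto
  have ih: "red G (p @ q)" using snoc.IH[OF r1 cs(1)] .
  have ecs: "E G c s" using E_sym[OF cs(2)] .
  have m2: "mov G c (p @ [s] @ q) = (mov G c q \<or> (comm G c q \<and> mov G c (p @ [s])))"
    using mov_append[of G c "p @ [s]" q] by simp
  have m3: "mov G c (p @ [s]) = (s = c \<or> (E G c s \<and> mov G c p))" by (rule mov_snoc)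
  have m4: "mov G c (p @ q) = (mov G c q \<or> (comm G c q \<and> mov G c p))" by (rule mov_append)
  have "\<not> mov G c (p @ q)" using m1 m2 m3 m4 ecs by blast
  then have "red G ((p @ q) @ [c])" using ih unfolding red_snoc by blast
  then show ?case by simp
qed

definition swp :: "'a graph \<Rightarrow> 'a list \<Rightarrow> 'a list \<Rightarrow> bool" where
  "swp G u u' \<longleftrightarrow> (\<exists>x y a b. E G a b \<and> u = x @ [a,b] @ y \<and> u' = x @ [b,a] @ y)"

abbreviation ceq :: "'a graph \<Rightarrow> 'a list \<Rightarrow> 'a list \<Rightarrow> bool" where "ceq G \<equiv> (swp G)\<^sup>*\<^sup>*"

lemma swpI: "E G a b \<Longrightarrow> swp G (x @ [a,b] @ y) (x @ [b,a] @ y)"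
  unfolding swp_def by (intro exI[of _ x] exI[of _ y] exI[of _ a] exI[of _ b]) simp

lemma swp_sym: "swp G u u' \<Longrightarrow> swp G u' u"
proof -
  assume "swp G u u'"
  then obtain x y a b where h: "E G a b" "u = x @ [a,b] @ y" "u' = x @ [b,a] @ y"
    unfolding swp_def by blast
  have "E G b a" using E_sym[OF h(1)] .
  then show ?thesis unfolding swp_def
    by (intro exI[of _ x] exI[of _ y] exI[of _ b] exI[of _ a]) (simp add: h)
qed

lemma ceq_sym: "ceq G u u' \<Longrightarrow> ceq G u' u"
proof (induction rule: rtranclp_induct)
  case base then show ?case by simp
next
  case (step y z)
  have "swp G z y" using swp_sym[OF step(2)] .
  then show ?case using step(3) by (rule converse_rtranclp_into_rtranclp)
qed

lemma swp_app: "swp G u u' \<Longrightarrow> swp G (x @ u @ y) (x @ u' @ y)"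
proof -
  assume "swp G u u'"
  then obtain x0 y0 a b where h: "E G a b" "u = x0 @ [a,b] @ y0" "u' = x0 @ [b,a] @ y0"
    unfolding swp_def by blast
  then show ?thesis unfolding swp_def
    by (intro exI[of _ "x @ x0"] exI[of _ "y0 @ y"] exI[of _ a] exI[of _ b]) simp
qed

lemma ceq_app: "ceq G u u' \<Longrightarrow> ceq G (x @ u @ y) (x @ u' @ y)"
proof (induction rule: rtranclp_induct)
  case base then show ?case by simp
next
  case (step y z)
  then show ?case using swp_app[OF step(2)] by (meson rtranclp.rtrancl_into_rtrancl)
qed

lemma swp_len: "swp G u u' \<Longrightarrow> length u = length u'" unfolding swp_def by auto
lemma swp_set: "swp G u u' \<Longrightarrow> set u = set u'" unfolding swp_def by auto

lemma ceq_len: "ceq G u u' \<Longrightarrow> length u = length u'"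
  by (induction rule: rtranclp_induct) (auto dest: swp_len)
lemma ceq_set: "ceq G u u' \<Longrightarrow> set u = set u'"
  by (induction rule: rtranclp_induct) (auto dest: swp_set)

lemma ceq_through: "comm G s q \<Longrightarrow> ceq G (p @ [s] @ q @ r) (p @ q @ [s] @ r)"
proof (induction q arbitrary: p)
  case Nil then show ?case by simp
next
  case (Cons c q)
  have "swp G (p @ [s, c] @ (q @ r)) (p @ [c, s] @ (q @ r))"
    using Cons.prems by (intro swpI) simp
  then have 1: "ceq G (p @ [s] @ (c # q) @ r) ((p @ [c]) @ [s] @ q @ r)" by simp
  have 2: "ceq G ((p @ [c]) @ [s] @ q @ r) ((p @ [c]) @ q @ [s] @ r)"
    using Cons.IH[of "p @ [c]"] Cons.prems by simp
  show ?case using rtranclp_trans[OF 1 2] by simp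
qed

lemma act_act: "red G u \<Longrightarrow> ceq G (act G s (act G s u)) u"
proof (cases "mov G s u")
  case True
  then obtain p q where u: "u = p @ [s] @ q" and c: "comm G s q" by (rule movE)
  assume r: "red G u"
  have a1: "act G s u = p @ q" using act_mov[OF c] u by simp
  have "\<not> mov G s p" using red_prefix[of G "p @ [s]" q] r u by simp
  moreover have "\<not> mov G s q" using mov_in[of G s q] comm_notin[OF c] by auto
  ultimately have "\<not> mov G s (p @ q)" by (simp add: mov_append)
  then have "act G s (p @ q) = p @ q @ [s]" by (simp add: act_nmov)
  moreover have "ceq G (p @ q @ [s]) u"
    using ceq_sym[OF ceq_through[OF c, of p "[]"]] u by simp
  ultimately show ?thesis using a1 by simp
next
  case False
  then have "act G s u = u @ [s] @ []" by (simp add: act_nmov)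
  then show ?thesis using act_mov[of G s "[]" u] by simp
qed

lemma act_red: "red G u \<Longrightarrow> red G (act G s u)"
proof (cases "mov G s u")
  case True
  then obtain p q where u: "u = p @ [s] @ q" and c: "comm G s q" by (rule movE)
  assume r: "red G u"
  show ?thesis using act_mov[OF c] red_del[of G p s q] r u c by simp
next
  case False
  assume "red G u" then show ?thesis using False by (simp add: act_nmov)
qed

lemma act_comm_1:
  assumes st: "E G s t" and ms: "mov G s u" and mt: "\<not> mov G t u"
  shows "act G s (act G t u) = act G t (act G s u)"
proof -
  obtain p q where u: "u = p @ [s] @ q" and c: "comm G s q" using ms by (rule movE)
  have ts: "E G t s" using E_sym[OF st] .
  have a1: "act G s u = p @ q" using act_mov[OF c] u by simp
  have "\<not> mov G t (p @ q)"
  proof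
    assume "mov G t (p @ q)"
    then have "mov G t q \<or> (comm G t q \<and> mov G t p)" by (simp add: mov_append)
    then have "mov G t (p @ [s] @ q)"
      using mov_append[of G t "p @ [s]" q] ts by auto
    then show False using mt u by simp
  qed
  then have a2: "act G t (act G s u) = p @ q @ [t]" using a1 by (simp add: act_nmov)
  have "act G t u = p @ [s] @ (q @ [t])" using act_nmov[OF mt] u by simp
  then have "act G s (act G t u) = p @ q @ [t]" using act_mov[of G s "q @ [t]" p] c st by simp
  then show ?thesis using a2 by simp
qed

lemma act_comm:
  assumes st: "E G s t" and r: "red G u"
  shows "ceq G (act G s (act G t u)) (act G t (act G s u))"
proof (cases "mov G s u")
  case ms: True
  show ?thesis
  proof (cases "mov G t u")
    case mt: True
    obtain p q where u: "u = p @ [s] @ q" and c: "comm G s q" using ms by (rule movE)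
    have "mov G t q \<or> (comm G t q \<and> (t = s \<or> (E G t s \<and> mov G t p)))"
      using mt u mov_append[of G t "p @ [s]" q] by (auto simp: eq_commute)
    moreover have "t \<noteq> s" using st by (auto simp: E_def)
    ultimately consider "mov G t q" | "comm G t q" "mov G t p" by blast
    then show ?thesis
    proof cases
      case 1
      then obtain q1 q2 where q: "q = q1 @ [t] @ q2" and c2: "comm G t q2" by (rule movE)
      have "u = (p @ [s] @ q1) @ [t] @ q2" using u q by simp
      then have "act G t u = p @ [s] @ (q1 @ q2)" using act_mov[OF c2, of "p @ [s] @ q1"] by simp
      then have e1: "act G s (act G t u) = p @ q1 @ q2" using act_mov[of G s "q1 @ q2" p] c q by simp
      have "act G s u = (p @ q1) @ [t] @ q2" using act_mov[OF c] u q by simp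
      then have e2: "act G t (act G s u) = p @ q1 @ q2" using act_mov[OF c2, of "p @ q1"] by simp
      show ?thesis using e1 e2 by simp
    next
      case 2
      obtain p1 p2 where p: "p = p1 @ [t] @ p2" and c2: "comm G t p2" using 2(2) by (rule movE)
      have ct: "comm G t (p2 @ [s] @ q)" using c2 2(1) E_sym[OF st] by simp
      have "u = p1 @ [t] @ (p2 @ [s] @ q)" using u p by simp
      then have "act G t u = (p1 @ p2) @ [s] @ q" using act_mov[OF ct, of p1] by simp
      then have e1: "act G s (act G t u) = p1 @ p2 @ q" using act_mov[OF c, of "p1 @ p2"] by simp
      have "act G s u = p1 @ [t] @ (p2 @ q)" using act_mov[OF c, of "p1 @ [t] @ p2"] u p by simp
      then have e2: "act G t (act G s u) = p1 @ p2 @ q" using act_mov[of G t "p2 @ q" p1] c2 2(1) by simp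
      show ?thesis using e1 e2 by simp
    qed
  next
    case mt: False
    show ?thesis using act_comm_1[OF st ms mt] by simp
  qed
next
  case ms: False
  show ?thesis
  proof (cases "mov G t u")
    case mt: True
    show ?thesis using act_comm_1[OF E_sym[OF st] mt ms] by simp
  next
    case mt: False
    have ne: "s \<noteq> t" using st by (auto simp: E_def)
    have "\<not> mov G s (u @ [t])" using ms ne by simp
    then have e1: "act G s (act G t u) = u @ [t, s]" using act_nmov[OF mt] act_nmov[of G s "u @ [t]"] by simp
    have "\<not> mov G t (u @ [s])" using mt ne by simp
    then have e2: "act G t (act G s u) = u @ [s, t]" using act_nmov[OF ms] act_nmov[of G t "u @ [s]"] by simp
    have "swp G (u @ [t, s] @ []) (u @ [s, t] @ [])" using E_sym[OF st] by (rule swpI)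
    then show ?thesis using e1 e2 by simp
  qed
qed

lemma act_swp: "swp G u u' \<Longrightarrow> ceq G (act G s u) (act G s u')"
proof -
  assume "swp G u u'"
  then obtain x y a b where ab: "E G a b" and u: "u = x @ [a,b] @ y" and u': "u' = x @ [b,a] @ y"
    unfolding swp_def by blast
  have ba: "E G b a" using E_sym[OF ab] .
  have ne: "a \<noteq> b" using ab by (auto simp: E_def)
  have sw: "\<And>z w. swp G (z @ [a,b] @ w) (z @ [b,a] @ w)" using ab by (rule swpI)
  have m1: "mov G s u = (mov G s y \<or> (comm G s y \<and> mov G s (x @ [a,b])))"
    using u mov_append[of G s "x @ [a,b]" y] by simp
  have m2: "mov G s u' = (mov G s y \<or> (comm G s y \<and> mov G s (x @ [b,a])))"
    using u' mov_append[of G s "x @ [b,a]" y] by simp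
  have mab: "mov G s (x @ [a,b]) = (b = s \<or> (E G s b \<and> (a = s \<or> (E G s a \<and> mov G s x))))"
    using mov_snoc[of G s "x @ [a]" b] by simp
  have mba: "mov G s (x @ [b,a]) = (a = s \<or> (E G s a \<and> (b = s \<or> (E G s b \<and> mov G s x))))"
    using mov_snoc[of G s "x @ [b]" a] by simp
  show ?thesis
  proof (cases "mov G s y")
    case True
    then obtain y1 y2 where y: "y = y1 @ [s] @ y2" and c: "comm G s y2" by (rule movE)
    have "act G s u = (x @ [a,b] @ y1) @ y2" using act_mov[OF c, of "x @ [a,b] @ y1"] u y by simp
    moreover have "act G s u' = (x @ [b,a] @ y1) @ y2" using act_mov[OF c, of "x @ [b,a] @ y1"] u' y by simp
    ultimately show ?thesis using sw[of x "y1 @ y2"] by simp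
  next
    case my: False
    show ?thesis
    proof (cases "comm G s y")
      case cy: True
      consider "b = s" | "a = s" | "a \<noteq> s" "b \<noteq> s" "E G s a" "E G s b" "mov G s x"
        | "\<not> mov G s u" "\<not> mov G s u'"
        using m1 m2 mab mba my cy by blast
      then show ?thesis
      proof cases
        case 1
        have "act G s u = (x @ [a]) @ y" using act_mov[OF cy, of "x @ [a]"] u 1 by simp
        moreover have "act G s u' = (x @ [a]) @ y" using act_mov[of G s "a # y" x] u' 1 cy ba by simp
        ultimately show ?thesis by simp
      next
        case 2
        have "act G s u = (x @ [b]) @ y" using act_mov[of G s "b # y" x] u 2 cy ab by simp
        moreover have "act G s u' = (x @ [b]) @ y" using act_mov[OF cy, of "x @ [b]"] u' 2 by simp
        ultimately show ?thesis by simp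
      next
        case 3
        obtain x1 x2 where x: "x = x1 @ [s] @ x2" and c: "comm G s x2" using 3(5) by (rule movE)
        have "act G s u = x1 @ (x2 @ [a,b] @ y)"
          using act_mov[of G s "x2 @ [a,b] @ y" x1] u x c 3 cy by simp
        moreover have "act G s u' = x1 @ (x2 @ [b,a] @ y)"
          using act_mov[of G s "x2 @ [b,a] @ y" x1] u' x c 3 cy by simp
        ultimately show ?thesis using sw[of "x1 @ x2" y] by simp
      next
        case 4
        have "act G s u = x @ [a,b] @ (y @ [s])" using act_nmov[OF 4(1)] u by simp
        moreover have "act G s u' = x @ [b,a] @ (y @ [s])" using act_nmov[OF 4(2)] u' by simp
        ultimately show ?thesis using r_into_rtranclp[of "swp G", OF sw[of x "y @ [s]"]] by simp
      qed
    next
      case False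
      then have n: "\<not> mov G s u" "\<not> mov G s u'" using m1 m2 my by auto
      have "act G s u = x @ [a,b] @ (y @ [s])" using act_nmov[OF n(1)] u by simp
      moreover have "act G s u' = x @ [b,a] @ (y @ [s])" using act_nmov[OF n(2)] u' by simp
      ultimately show ?thesis using r_into_rtranclp[of "swp G", OF sw[of x "y @ [s]"]] by simp
    qed
  qed
qed

lemma act_ceq: "ceq G u u' \<Longrightarrow> ceq G (act G s u) (act G s u')"
proof (induction rule: rtranclp_induct)
  case base then show ?case by simp
next
  case (step y z)
  then show ?case using act_swp[OF step(2)] by (meson rtranclp_trans)
qed

definition actw :: "'a graph \<Rightarrow> 'a list \<Rightarrow> 'a list \<Rightarrow> 'a list" where
  "actw G u w = foldl (\<lambda>u s. act G s u) u w"

lemma actw_Nil[simp]: "actw G u [] = u" by (simp add: actw_def)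
lemma actw_Cons[simp]: "actw G u (s # w) = actw G (act G s u) w" by (simp add: actw_def)
lemma actw_append[simp]: "actw G u (x @ y) = actw G (actw G u x) y" by (simp add: actw_def)
lemma actw_snoc: "actw G u (x @ [s]) = act G s (actw G u x)" by simp

lemma actw_red: "red G u \<Longrightarrow> red G (actw G u w)"
  by (induction w arbitrary: u) (auto simp: act_red)

lemma actw_ceq: "ceq G u u' \<Longrightarrow> ceq G (actw G u w) (actw G u' w)"
  by (induction w arbitrary: u u') (auto simp: act_ceq)

definition A :: "'a graph \<Rightarrow> 'a list \<Rightarrow> 'a list" where "A G w = actw G [] w"

lemma A_red: "red G (A G w)" by (simp add: A_def actw_red)

lemma A_id: "red G w \<Longrightarrow> A G w = w"
proof (induction w rule: rev_induct)
  case Nil then show ?case by (simp add: A_def)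
next
  case (snoc s w)
  then have "red G w" "\<not> mov G s w" by auto
  then show ?case using snoc.IH by (simp add: A_def act_nmov)
qed

lemma A_len: "length (A G w) \<le> length w"
proof (induction w rule: rev_induct)
  case Nil then show ?case by (simp add: A_def)
next
  case (snoc s w)
  then show ?case using len_act[of G s "A G w"] by (simp add: A_def)
qed

lemma A_set: "set (A G w) \<subseteq> set w"
proof (induction w rule: rev_induct)
  case Nil then show ?case by (simp add: A_def)
next
  case (snoc s w)
  then show ?case using set_act[of G s "A G w"] by (auto simp: A_def)
qed

lemma A_inv: "racg_eq G w w' \<Longrightarrow> ceq G (A G w) (A G w')"
proof (induction rule: racg_eq.induct)
  case (refl w) then show ?case by simp
next
  case (sym w w') then show ?case using ceq_sym by blast
next
  case (trans w w' w'') then show ?case using rtranclp_trans by metis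
next
  case (cancel xs ys v)
  have "ceq G (act G v (act G v (A G xs))) (A G xs)" using act_act[OF A_red] .
  then have "ceq G (actw G (act G v (act G v (A G xs))) ys) (actw G (A G xs) ys)" by (rule actw_ceq)
  moreover have "A G (xs @ [v, v] @ ys) = actw G (act G v (act G v (A G xs))) ys"
    unfolding A_def by simp
  moreover have "A G (xs @ ys) = actw G (A G xs) ys" unfolding A_def by simp
  ultimately show ?case by simp
next
  case (commute xs ys u v)
  show ?case
  proof (cases "u = v")
    case True then show ?thesis by simp
  next
    case False
    then have "E G v u" using commute(3) by (simp add: E_def insert_commute)
    then have "ceq G (act G v (act G u (A G xs))) (act G u (act G v (A G xs)))"
      using act_comm[OF _ A_red[of G xs]] by metis
    then have "ceq G (actw G (act G v (act G u (A G xs))) ys) (actw G (act G u (act G v (A G xs))) ys)"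
      by (rule actw_ceq)
    moreover have "A G (xs @ [u, v] @ ys) = actw G (act G v (act G u (A G xs))) ys"
      unfolding A_def by simp
    moreover have "A G (xs @ [v, u] @ ys) = actw G (act G u (act G v (A G xs))) ys"
      unfolding A_def by simp
    ultimately show ?thesis by simp
  qed
qed

theorem tits: "red G w \<Longrightarrow> racg_eq G w w' \<Longrightarrow> length w \<le> length w'"
proof -
  assume r: "red G w" and e: "racg_eq G w w'"
  have "ceq G w (A G w')" using A_inv[OF e] A_id[OF r] by simp
  then have "length w = length (A G w')" by (rule ceq_len)
  then show ?thesis using A_len[of G w'] by simp
qed




lemma fsg_edge: "finite_simple_graph G \<Longrightarrow> {u,v} \<in> edges G \<Longrightarrow> u \<in> verts G \<and> v \<in> verts G \<and> u \<noteq> v"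
  unfolding finite_simple_graph_def by (auto simp: doubleton_eq_iff)

lemma racg_set: "racg_eq G w w' \<Longrightarrow> finite_simple_graph G \<Longrightarrow> set w \<subseteq> verts G \<and> set w' \<subseteq> verts G"
  by (induction rule: racg_eq.induct) (auto dest: fsg_edge)

lemma racg_congL: "racg_eq G w w' \<Longrightarrow> set z \<subseteq> verts G \<Longrightarrow> racg_eq G (z @ w) (z @ w')"
proof (induction rule: racg_eq.induct)
  case (refl w) then show ?case by (simp add: racg_eq.refl)
next
  case (sym w w') then show ?case by (simp add: racg_eq.sym)
next
  case (trans w w' w'') then show ?case by (meson racg_eq.trans)
next
  case (cancel xs ys v) then show ?case using racg_eq.cancel[of "z @ xs" G ys v] by simp
next
  case (commute xs ys u v) then show ?case using racg_eq.commute[of "z @ xs" G ys u v] by simp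
qed

lemma racg_congR: "racg_eq G w w' \<Longrightarrow> set z \<subseteq> verts G \<Longrightarrow> racg_eq G (w @ z) (w' @ z)"
proof (induction rule: racg_eq.induct)
  case (refl w) then show ?case by (simp add: racg_eq.refl)
next
  case (sym w w') then show ?case by (simp add: racg_eq.sym)
next
  case (trans w w' w'') then show ?case by (meson racg_eq.trans)
next
  case (cancel xs ys v) then show ?case using racg_eq.cancel[of xs G "ys @ z" v] by simp
next
  case (commute xs ys u v) then show ?case using racg_eq.commute[of xs G "ys @ z" u v] by simp
qed

lemma ceq_racg: "ceq G u u' \<Longrightarrow> set u \<subseteq> verts G \<Longrightarrow> racg_eq G u u'"
proof (induction rule: rtranclp_induct)
  case base then show ?case by (rule racg_eq.refl)
next
  case (step y z)
  from step(2) obtain x yy a b where ab: "E G a b" and y: "y = x @ [a,b] @ yy" and z: "z = x @ [b,a] @ yy"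
    unfolding swp_def by blast
  have "set y \<subseteq> verts G" using ceq_set[OF step(1)] step(4) by simp
  then have "racg_eq G y z" using racg_eq.commute[of x G yy a b] ab y z by (auto simp: E_def)
  then show ?case using step by (meson racg_eq.trans)
qed

lemma racg_act: "set u \<subseteq> verts G \<Longrightarrow> s \<in> verts G \<Longrightarrow> racg_eq G (u @ [s]) (act G s u)"
proof (cases "mov G s u")
  case True
  assume su: "set u \<subseteq> verts G" and s: "s \<in> verts G"
  obtain p q where u: "u = p @ [s] @ q" and c: "comm G s q" using True by (rule movE)
  have "ceq G (p @ [s] @ q @ [s]) (p @ q @ [s] @ [s])" using ceq_through[OF c] by simp
  then have 1: "racg_eq G (u @ [s]) (p @ q @ [s,s])" using ceq_racg su s u by fastforce
  have 2: "racg_eq G ((p @ q) @ [s,s] @ []) ((p @ q) @ [])"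
    by (rule racg_eq.cancel) (use su s u in auto)
  show ?thesis using act_mov[OF c] u racg_eq.trans[OF 1] 2 by simp
next
  case False
  assume su: "set u \<subseteq> verts G" and s: "s \<in> verts G"
  then show ?thesis using False by (simp add: act_nmov racg_eq.refl)
qed

lemma A_snoc: "A G (w @ [s]) = act G s (A G w)"
  unfolding A_def by simp

lemma racg_A: "set w \<subseteq> verts G \<Longrightarrow> racg_eq G w (A G w)"
proof (induction w rule: rev_induct)
  case Nil then show ?case unfolding A_def by (simp add: racg_eq.refl)
next
  case (snoc s w)
  have sw: "set w \<subseteq> verts G" and s: "s \<in> verts G" using snoc.prems by auto
  have s1: "set [s] \<subseteq> verts G" using s by simp
  have 1: "racg_eq G (w @ [s]) (A G w @ [s])" using racg_congR[OF snoc.IH[OF sw] s1] .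
  have "set (A G w) \<subseteq> verts G" using A_set[of G w] sw by (rule order_trans)
  then have 2: "racg_eq G (A G w @ [s]) (act G s (A G w))" using s by (rule racg_act)
  show ?case unfolding A_snoc using racg_eq.trans[OF 1 2] .
qed

lemma racg_inv: "set p \<subseteq> verts G \<Longrightarrow> set r \<subseteq> verts G \<Longrightarrow> racg_eq G (rev p @ p @ r) r"
proof (induction p arbitrary: r)
  case Nil then show ?case by (simp add: racg_eq.refl)
next
  case (Cons a p)
  have 1: "racg_eq G (rev p @ [a,a] @ (p @ r)) (rev p @ (p @ r))"
    by (rule racg_eq.cancel) (use Cons.prems in auto)
  have 2: "racg_eq G (rev p @ p @ r) r" using Cons by simp
  show ?case using racg_eq.trans[OF 1 2] by simp
qed

abbreviation cls where "cls G \<equiv> racg_class G"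

lemma cls_eq: assumes "racg_eq G a b" shows "cls G a = cls G b"
proof -
  have "racg_eq G a = racg_eq G b"
  proof (rule ext)
    fix x show "racg_eq G a x = racg_eq G b x"
      using assms racg_eq.sym[OF assms] racg_eq.trans by metis
  qed
  then show ?thesis unfolding racg_class_def by simp
qed

lemma in_cls: "set p \<subseteq> verts G \<Longrightarrow> p \<in> cls G p"
  unfolding racg_class_def by (simp add: racg_eq.refl)

lemma cls_eqD: "cls G a = cls G b \<Longrightarrow> set a \<subseteq> verts G \<Longrightarrow> racg_eq G a b"
proof -
  assume e: "cls G a = cls G b" and s: "set a \<subseteq> verts G"
  have "a \<in> cls G b" using in_cls[OF s] e by simp
  then have "racg_eq G b a" unfolding racg_class_def by simp
  then show ?thesis by (rule racg_eq.sym)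
qed

lemma mult_cls:
  assumes fs: "finite_simple_graph G" and p: "set p \<subseteq> verts G" and q: "set q \<subseteq> verts G"
  shows "cls G p \<otimes>\<^bsub>RACG G\<^esub> cls G q = cls G (p @ q)"
proof -
  define x where "x = (SOME x. x \<in> cls G p)"
  define y where "y = (SOME y. y \<in> cls G q)"
  have xp: "racg_eq G p x" using someI[of "\<lambda>x. x \<in> cls G p", OF in_cls[OF p]]
    unfolding x_def racg_class_def by simp
  have yq: "racg_eq G q y" using someI[of "\<lambda>x. x \<in> cls G q", OF in_cls[OF q]]
    unfolding y_def racg_class_def by simp
  have xs: "set x \<subseteq> verts G" using racg_set[OF xp fs] by simp
  have "racg_eq G (p @ q) (x @ y)"
    using racg_eq.trans[OF racg_congR[OF xp q] racg_congL[OF yq xs]] .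
  then have "cls G (x @ y) = cls G (p @ q)" by (rule cls_eq[OF racg_eq.sym])
  then show ?thesis unfolding RACG_def x_def y_def by simp
qed

lemma carrier_RACG: "X \<in> carrier (RACG G) \<longleftrightarrow> (\<exists>p. set p \<subseteq> verts G \<and> X = cls G p)"
  unfolding RACG_def by auto

lemma wd_le:
  assumes fs: "finite_simple_graph G" and p: "set p \<subseteq> verts G" and w: "set w \<subseteq> verts G"
    and e: "cls G (p @ w) = Y"
  shows "word_dist G (cls G p) Y \<le> length w"
  unfolding word_dist_def
  by (rule Least_le) (use mult_cls[OF fs p w] e w in auto)

lemma wd_ex:
  assumes fs: "finite_simple_graph G" and p: "set p \<subseteq> verts G" and q: "set q \<subseteq> verts G"
  shows "\<exists>w. set w \<subseteq> verts G \<and> length w = word_dist G (cls G p) (cls G q) \<and> cls G (p @ w) = cls G q"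
proof -
  let ?P = "\<lambda>n. \<exists>w. set w \<subseteq> verts G \<and> length w = n \<and> cls G p \<otimes>\<^bsub>RACG G\<^esub> cls G w = cls G q"
  have "racg_eq G (rev (rev p) @ rev p @ q) q" by (rule racg_inv) (use p q in auto)
  then have "cls G (p @ rev p @ q) = cls G q" using cls_eq by fastforce
  then have "?P (length (rev p @ q))"
    by (intro exI[of _ "rev p @ q"]) (use mult_cls[OF fs p, of "rev p @ q"] p q in simp)
  then have "?P (word_dist G (cls G p) (cls G q))" unfolding word_dist_def by (rule LeastI)
  then show ?thesis using mult_cls[OF fs p] by auto
qed



definition fib :: "'a graph \<Rightarrow> ('a \<Rightarrow> 'b) \<Rightarrow> 'b \<Rightarrow> 'a set" where
  "fib L g v = {a \<in> verts L. g a = v}"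
definition Fv :: "'a graph \<Rightarrow> ('a \<Rightarrow> 'b) \<Rightarrow> 'b \<Rightarrow> 'a list" where
  "Fv L g v = (SOME l. distinct l \<and> set l = fib L g v)"
definition FW :: "'a graph \<Rightarrow> ('a \<Rightarrow> 'b) \<Rightarrow> 'b list \<Rightarrow> 'a list" where
  "FW L g w = concat (map (Fv L g) w)"
definition fmap :: "'a graph \<Rightarrow> ('a \<Rightarrow> 'b) \<Rightarrow> 'b list set \<Rightarrow> 'a list set" where
  "fmap L g X = cls L (FW L g (SOME w. w \<in> X))"

lemma FW_Nil[simp]: "FW L g [] = []" by (simp add: FW_def)
lemma FW_Cons[simp]: "FW L g (v # w) = Fv L g v @ FW L g w" by (simp add: FW_def)
lemma FW_append[simp]: "FW L g (x @ y) = FW L g x @ FW L g y" by (simp add: FW_def)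

lemma compl_verts[simp]: "verts (complement_graph X) = verts X"
  by (simp add: complement_graph_def verts_def)
lemma compl_edges: "edges (complement_graph X) =
   {{u, v} |u v. u \<in> verts X \<and> v \<in> verts X \<and> u \<noteq> v \<and> {u, v} \<notin> edges X}"
  by (simp add: complement_graph_def edges_def verts_def)

lemma compl_edge: "{a,b} \<in> edges (complement_graph X) \<longleftrightarrow> a \<in> verts X \<and> b \<in> verts X \<and> a \<noteq> b \<and> {a,b} \<notin> edges X"
  unfolding compl_edges by (auto simp: doubleton_eq_iff insert_commute)

lemma compl_single: "{v} \<notin> edges (complement_graph X)"
  unfolding compl_edges by (auto simp: doubleton_eq_iff)

locale cover =
  fixes L :: "'a graph" and G :: "'b graph" and g :: "'a \<Rightarrow> 'b"
  assumes fsL: "finite_simple_graph L" and fsG: "finite_simple_graph G"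
    and mor: "graph_morphism g (complement_graph L) (complement_graph G)"
    and sur: "g ` verts L = verts G"
    and ls: "locally_surjective g (complement_graph L) (complement_graph G)"
begin

lemma Fv: "distinct (Fv L g v) \<and> set (Fv L g v) = fib L g v"
proof -
  have "finite (fib L g v)" using fsL unfolding finite_simple_graph_def fib_def by auto
  then obtain l where "set l = fib L g v \<and> distinct l" using finite_distinct_list by blast
  then have "distinct l \<and> set l = fib L g v" by simp
  then show ?thesis unfolding Fv_def by (rule someI)
qed

lemma in_Fv: "a \<in> set (Fv L g v) \<longleftrightarrow> a \<in> verts L \<and> g a = v"
  using Fv by (auto simp: fib_def)

lemma mor_edge: "{a,b} \<in> edges (complement_graph L) \<Longrightarrow> {g a, g b} \<in> edges (complement_graph G)"
  using mor unfolding graph_morphism_def by force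

lemma fib_E: "a \<in> verts L \<Longrightarrow> b \<in> verts L \<Longrightarrow> g a = g b \<Longrightarrow> a \<noteq> b \<Longrightarrow> E L a b"
proof (rule ccontr)
  assume a: "a \<in> verts L" "b \<in> verts L" "g a = g b" "a \<noteq> b" "\<not> E L a b"
  then have "{a,b} \<in> edges (complement_graph L)" by (simp add: compl_edge E_def)
  then have "{g a, g b} \<in> edges (complement_graph G)" by (rule mor_edge)
  then have "{g a} \<in> edges (complement_graph G)" using a(3) by simp
  moreover have "{g a} \<notin> edges (complement_graph G)" by (rule compl_single)
  ultimately show False by contradiction
qed

lemma fib_E2: "{u,v} \<in> edges G \<Longrightarrow> a \<in> verts L \<Longrightarrow> b \<in> verts L \<Longrightarrow> g a = u \<Longrightarrow> g b = v \<Longrightarrow> E L a b"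
proof (rule ccontr)
  assume a: "{u,v} \<in> edges G" "a \<in> verts L" "b \<in> verts L" "g a = u" "g b = v" "\<not> E L a b"
  have "u \<noteq> v" using fsg_edge[OF fsG a(1)] by simp
  then have "a \<noteq> b" using a(4,5) by metis
  then have "{a,b} \<in> edges (complement_graph L)" using a by (simp add: compl_edge E_def)
  then have "{g a, g b} \<in> edges (complement_graph G)" by (rule mor_edge)
  then have "{u, v} \<in> edges (complement_graph G)" using a(4,5) by simp
  then have "{u, v} \<notin> edges G" by (simp add: compl_edge)
  then show False using a(1) by contradiction
qed

lemma ls_lemma:
  assumes a: "a \<in> verts L" and v: "v \<in> verts G" and nv: "v \<noteq> g a" and ne: "\<not> E G (g a) v"
  shows "\<exists>c. c \<in> verts L \<and> g c = v \<and> \<not> E L a c"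
proof -
  have ga: "g a \<in> verts G" using sur a by auto
  have "{g a, v} \<in> edges (complement_graph G)" using ga v nv ne by (auto simp: compl_edge E_def)
  with ls a obtain e' where e': "e' \<in> edges (complement_graph L)" "a \<in> e'" "g ` e' = {g a, v}"
    unfolding locally_surjective_def by fastforce
  from e'(1) obtain x y where xy: "e' = {x,y}" "x \<in> verts L" "y \<in> verts L" "x \<noteq> y" "{x,y} \<notin> edges L"
    unfolding compl_edges by blast
  obtain c where c: "e' = {a,c}" "c \<in> verts L" using xy e'(2) by (auto simp: insert_commute)
  have nc: "{a,c} \<notin> edges L" using xy c by (auto simp: doubleton_eq_iff insert_commute)
  have "{g a, g c} = {g a, v}" using e'(3) c by simp
  then have "g c = v" using nv by (auto simp: doubleton_eq_iff)
  then show ?thesis using c nc by (auto simp: E_def)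
qed

lemma FW_set: "set (FW L g w) \<subseteq> verts L"
  by (induction w) (auto simp: in_Fv)

lemma Fv_twice: "racg_eq L (x @ Fv L g v @ Fv L g v @ y) (x @ y)"
  if "set x \<subseteq> verts L" "set y \<subseteq> verts L"
proof -
  have "\<And>l x y. distinct l \<Longrightarrow> set l \<subseteq> fib L g v \<Longrightarrow> set x \<subseteq> verts L \<Longrightarrow> set y \<subseteq> verts L
      \<Longrightarrow> racg_eq L (x @ l @ l @ y) (x @ y)"
  proof -
    fix l :: "'a list"
    show "\<And>x y. distinct l \<Longrightarrow> set l \<subseteq> fib L g v \<Longrightarrow> set x \<subseteq> verts L \<Longrightarrow> set y \<subseteq> verts L
      \<Longrightarrow> racg_eq L (x @ l @ l @ y) (x @ y)"
    proof (induction l)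
      case Nil then show ?case by (simp add: racg_eq.refl)
    next
      case (Cons a l)
      have c: "comm L a l" unfolding comm_def using Cons.prems by (auto simp: fib_def intro!: fib_E)
      have s: "set (x @ (a # l) @ (a # l) @ y) \<subseteq> verts L" using Cons.prems by (auto simp: fib_def)
      have s2: "set (x @ [a] @ l @ (a # l @ y)) \<subseteq> verts L" using s by simp
      have 1: "racg_eq L (x @ a # l @ a # l @ y) (x @ l @ a # a # l @ y)"
        using ceq_racg[OF ceq_through[OF c, of x "a # l @ y"] s2] by simp
      have 2: "racg_eq L (x @ l @ a # a # l @ y) (x @ l @ l @ y)"
        using racg_eq.cancel[of "x @ l" L "l @ y" a] s by simp
      have 3: "racg_eq L (x @ l @ l @ y) (x @ y)" using Cons by auto
      show ?case using racg_eq.trans[OF racg_eq.trans[OF 1 2] 3] by simp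
    qed
  qed
  then show ?thesis using that Fv by blast
qed

lemma lists_comm: "(\<forall>a\<in>set l1. \<forall>b\<in>set l2. E L a b) \<Longrightarrow> ceq L (x @ l1 @ l2 @ y) (x @ l2 @ l1 @ y)"
proof (induction l1 arbitrary: x)
  case Nil then show ?case by simp
next
  case (Cons a l1)
  have 1: "ceq L (x @ a # l1 @ l2 @ y) (x @ a # l2 @ l1 @ y)"
    using Cons.IH[of "x @ [a]"] Cons.prems by simp
  have c: "comm L a l2" using Cons.prems by (simp add: comm_def)
  have 2: "ceq L (x @ a # l2 @ l1 @ y) (x @ l2 @ a # l1 @ y)" using ceq_through[OF c, of x "l1 @ y"] by simp
  show ?case using rtranclp_trans[OF 1 2] by simp
qed

lemma FW_resp: "racg_eq G w w' \<Longrightarrow> racg_eq L (FW L g w) (FW L g w')"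
proof (induction rule: racg_eq.induct)
  case (refl w) then show ?case using FW_set by (simp add: racg_eq.refl)
next
  case (sym w w') then show ?case by (simp add: racg_eq.sym)
next
  case (trans w w' w'') then show ?case by (meson racg_eq.trans)
next
  case (cancel xs ys v) then show ?case using Fv_twice FW_set by simp
next
  case (commute xs ys u v)
  have "\<forall>a\<in>set (Fv L g u). \<forall>b\<in>set (Fv L g v). E L a b"
    using commute(3) by (auto simp: in_Fv intro: fib_E2)
  then have "ceq L (FW L g xs @ Fv L g u @ Fv L g v @ FW L g ys) (FW L g xs @ Fv L g v @ Fv L g u @ FW L g ys)"
    by (rule lists_comm)
  moreover have "set (FW L g xs @ Fv L g u @ Fv L g v @ FW L g ys) \<subseteq> verts L"
    using FW_set[of "xs @ [u,v] @ ys"] by simp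
  ultimately have "racg_eq L (FW L g xs @ Fv L g u @ Fv L g v @ FW L g ys) (FW L g xs @ Fv L g v @ Fv L g u @ FW L g ys)"
    by (rule ceq_racg)
  then show ?case by simp
qed

lemma nmov_FW: "set w \<subseteq> verts G \<Longrightarrow> a \<in> verts L \<Longrightarrow> mov L a (FW L g w) \<Longrightarrow> mov G (g a) w"
proof (induction w rule: rev_induct)
  case Nil then show ?case by simp
next
  case (snoc u w)
  have "mov L a (Fv L g u) \<or> (comm L a (Fv L g u) \<and> mov L a (FW L g w))"
    using snoc.prems(3) mov_append by fastforce
  then show ?case
  proof
    assume "mov L a (Fv L g u)"
    then have "g a = u" using mov_in in_Fv by fastforce
    then show ?thesis by simp
  next
    assume h: "comm L a (Fv L g u) \<and> mov L a (FW L g w)"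
    then have m: "mov G (g a) w" using snoc by auto
    show ?thesis
    proof (cases "u = g a")
      case True then show ?thesis by simp
    next
      case False
      have "E G (g a) u"
      proof (rule ccontr)
        assume "\<not> E G (g a) u"
        then obtain c where "c \<in> verts L" "g c = u" "\<not> E L a c"
          using ls_lemma[of a u] snoc.prems False by auto
        then show False using h in_Fv by (auto simp: comm_def)
      qed
      then show ?thesis using m by simp
    qed
  qed
qed

lemma red_app_list: "distinct l \<Longrightarrow> red L X \<Longrightarrow> (\<forall>a\<in>set l. \<not> mov L a X) \<Longrightarrow> red L (X @ l)"
proof (induction l rule: rev_induct)
  case Nil then show ?case by simp
next
  case (snoc a l)
  have r: "red L (X @ l)" using snoc by simp
  have "\<not> mov L a (X @ l)"
  proof
    assume "mov L a (X @ l)"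
    then have "mov L a l \<or> mov L a X" by (auto simp: mov_append)
    then show False using snoc.prems mov_in by fastforce
  qed
  then show ?case using r red_snoc[of L "X @ l" a] by simp
qed

lemma FW_red: "set w \<subseteq> verts G \<Longrightarrow> red G w \<Longrightarrow> red L (FW L g w)"
proof (induction w rule: rev_induct)
  case Nil then show ?case by simp
next
  case (snoc v w)
  then have r: "red G w" and nm: "\<not> mov G v w" and sw: "set w \<subseteq> verts G" by auto
  have "\<forall>a\<in>set (Fv L g v). \<not> mov L a (FW L g w)"
  proof
    fix a assume "a \<in> set (Fv L g v)"
    then have a: "a \<in> verts L" "g a = v" by (simp_all add: in_Fv)
    show "\<not> mov L a (FW L g w)"
    proof
      assume "mov L a (FW L g w)"
      then have "mov G (g a) w" using nmov_FW[OF sw a(1)] by blast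
      then show False using nm a(2) by simp
    qed
  qed
  then have "red L (FW L g w @ Fv L g v)"
    using red_app_list[OF conjunct1[OF Fv] snoc.IH[OF sw r]] by blast
  then show ?case by simp
qed

lemma FW_len1: "set w \<subseteq> verts G \<Longrightarrow> length w \<le> length (FW L g w)"
proof (induction w)
  case Nil then show ?case by simp
next
  case (Cons v w)
  have "v \<in> verts G" using Cons by simp
  then have "v \<in> g ` verts L" using sur by simp
  then obtain a where "a \<in> verts L" "g a = v" by blast
  then have "a \<in> set (Fv L g v)" by (simp add: in_Fv)
  then have p: "0 < length (Fv L g v)" by (cases "Fv L g v") auto
  have "length w \<le> length (FW L g w)" using Cons by simp
  moreover have "length (FW L g (v # w)) = length (Fv L g v) + length (FW L g w)" by simp
  moreover have "length (v # w) = Suc (length w)" by simp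
  ultimately show ?case using p by linarith
qed

lemma FW_len2: "length (FW L g w) \<le> card (verts L) * length w"
proof (induction w)
  case Nil then show ?case by simp
next
  case (Cons v w)
  have fin: "finite (verts L)" using fsL by (simp add: finite_simple_graph_def)
  have "length (Fv L g v) = card (fib L g v)" using Fv distinct_card by metis
  also have "\<dots> \<le> card (verts L)" using fin by (intro card_mono) (auto simp: fib_def)
  finally show ?case using Cons by simp
qed

lemma fmap_cls: "set p \<subseteq> verts G \<Longrightarrow> fmap L g (cls G p) = cls L (FW L g p)"
proof -
  assume p: "set p \<subseteq> verts G"
  have "racg_eq G p (SOME w. w \<in> cls G p)"
    using someI[of "\<lambda>x. x \<in> cls G p", OF in_cls[OF p]] unfolding racg_class_def by simp
  then show ?thesis unfolding fmap_def using FW_resp cls_eq by metis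
qed

end



context cover
begin

lemma lower:
  assumes p: "set p \<subseteq> verts G" and q: "set q \<subseteq> verts G"
  shows "word_dist G (cls G p) (cls G q) \<le> word_dist L (cls L (FW L g p)) (cls L (FW L g q))"
proof -
  have fp: "set (FW L g p) \<subseteq> verts L" by (rule FW_set)
  have fq: "set (FW L g q) \<subseteq> verts L" by (rule FW_set)
  obtain u where u: "set u \<subseteq> verts L" "length u = word_dist L (cls L (FW L g p)) (cls L (FW L g q))"
     "cls L (FW L g p @ u) = cls L (FW L g q)"
    using wd_ex[OF fsL fp fq] by blast
  define z where "z = rev p @ q"
  have zs: "set z \<subseteq> verts G" using p q unfolding z_def by simp
  define w where "w = A G z"
  have zw: "racg_eq G z w" unfolding w_def by (rule racg_A[OF zs])
  have ws: "set w \<subseteq> verts G" unfolding w_def using A_set[of G z] zs by (rule order_trans)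
  have rw: "red G w" unfolding w_def by (rule A_red)
  have rp: "set (rev p) \<subseteq> verts G" using p by simp
  have i1: "racg_eq G (rev p @ p) []" using racg_inv[OF p, of "[]"] by simp
  have i2: "racg_eq L (FW L g (rev p) @ FW L g p) []" using FW_resp[OF i1] by simp
  have 1: "racg_eq L ((FW L g (rev p) @ FW L g p) @ u) ([] @ u)" using racg_congR[OF i2 u(1)] .
  have fpu: "set (FW L g p @ u) \<subseteq> verts L" using fp u(1) by simp
  have e: "racg_eq L (FW L g p @ u) (FW L g q)" using cls_eqD[OF u(3) fpu] .
  have 2: "racg_eq L (FW L g (rev p) @ (FW L g p @ u)) (FW L g (rev p) @ FW L g q)"
    using racg_congL[OF e FW_set] .
  have h1: "racg_eq L u (FW L g (rev p) @ (FW L g p @ u))" using racg_eq.sym[OF 1] by simp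
  have 3: "racg_eq L u (FW L g z)" using racg_eq.trans[OF h1 2] unfolding z_def by simp
  have 4: "racg_eq L (FW L g w) u"
    using racg_eq.trans[OF FW_resp[OF racg_eq.sym[OF zw]] racg_eq.sym[OF 3]] .
  have 5: "length (FW L g w) \<le> length u" using tits[OF FW_red[OF ws rw] 4] .
  have 6: "length w \<le> length (FW L g w)" using FW_len1[OF ws] .
  have 7: "racg_eq G (p @ w) (p @ z)" using racg_congL[OF racg_eq.sym[OF zw] p] .
  have 8: "racg_eq G (rev (rev p) @ rev p @ q) q" using racg_inv[OF rp q] .
  have h8: "racg_eq G (p @ z) q" using 8 unfolding z_def by simp
  have 9: "racg_eq G (p @ w) q" using racg_eq.trans[OF 7 h8] .
  have "word_dist G (cls G p) (cls G q) \<le> length w" using wd_le[OF fsG p ws cls_eq[OF 9]] .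
  then show ?thesis using 5 6 u(2) by linarith
qed

lemma upper:
  assumes p: "set p \<subseteq> verts G" and q: "set q \<subseteq> verts G"
  shows "word_dist L (cls L (FW L g p)) (cls L (FW L g q)) \<le> card (verts L) * word_dist G (cls G p) (cls G q)"
proof -
  obtain w where w: "set w \<subseteq> verts G" "length w = word_dist G (cls G p) (cls G q)" "cls G (p @ w) = cls G q"
    using wd_ex[OF fsG p q] by blast
  have pw: "set (p @ w) \<subseteq> verts G" using p w(1) by simp
  have "racg_eq G (p @ w) q" using cls_eqD[OF w(3) pw] .
  then have "racg_eq L (FW L g (p @ w)) (FW L g q)" by (rule FW_resp)
  then have "cls L (FW L g (p @ w)) = cls L (FW L g q)" by (rule cls_eq)
  then have c: "cls L (FW L g p @ FW L g w) = cls L (FW L g q)" by simp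
  have "word_dist L (cls L (FW L g p)) (cls L (FW L g q)) \<le> length (FW L g w)"
    using wd_le[OF fsL FW_set FW_set c] .
  also have "\<dots> \<le> card (verts L) * length w" by (rule FW_len2)
  finally show ?thesis using w(2) by simp
qed

end

theorem corollary6p3:
  fixes Lambda :: "'a graph" and Gamma :: "'b graph" and g :: "'a \<Rightarrow> 'b"
  assumes "finite_simple_graph Lambda" and "finite_simple_graph Gamma"
    and "graph_morphism g (complement_graph Lambda) (complement_graph Gamma)"
    and "g ` verts Lambda = verts Gamma"
    and "locally_surjective g (complement_graph Lambda) (complement_graph Gamma)"
  shows "\<exists>f. f \<in> hom (RACG Gamma) (RACG Lambda) \<and> inj_on f (carrier (RACG Gamma))
             \<and> qi_embedding Gamma Lambda f"
proof -
  interpret cover Lambda Gamma g by unfold_locales (rule assms)+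
  let ?f = "fmap Lambda g"
  have cr: "\<And>X. X \<in> carrier (RACG Gamma) \<Longrightarrow> \<exists>p. set p \<subseteq> verts Gamma \<and> X = cls Gamma p"
    by (simp only: carrier_RACG)
  have hom: "?f \<in> hom (RACG Gamma) (RACG Lambda)"
  proof (rule homI)
    fix X assume "X \<in> carrier (RACG Gamma)"
    then obtain p where p: "set p \<subseteq> verts Gamma" "X = cls Gamma p" using cr by blast
    have "?f X = cls Lambda (FW Lambda g p)" using fmap_cls[OF p(1)] p(2) by simp
    moreover have "set (FW Lambda g p) \<subseteq> verts Lambda" by (rule FW_set)
    ultimately show "?f X \<in> carrier (RACG Lambda)" unfolding carrier_RACG by blast
  next
    fix X Y assume X: "X \<in> carrier (RACG Gamma)" and Y: "Y \<in> carrier (RACG Gamma)"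
    obtain p where p: "set p \<subseteq> verts Gamma" "X = cls Gamma p" using cr[OF X] by blast
    obtain q where q: "set q \<subseteq> verts Gamma" "Y = cls Gamma q" using cr[OF Y] by blast
    have pq: "set (p @ q) \<subseteq> verts Gamma" using p q by simp
    have "X \<otimes>\<^bsub>RACG Gamma\<^esub> Y = cls Gamma (p @ q)" using mult_cls[OF fsG p(1) q(1)] p(2) q(2) by simp
    then have "?f (X \<otimes>\<^bsub>RACG Gamma\<^esub> Y) = cls Lambda (FW Lambda g (p @ q))"
      using fmap_cls[OF pq] by simp
    also have "\<dots> = cls Lambda (FW Lambda g p) \<otimes>\<^bsub>RACG Lambda\<^esub> cls Lambda (FW Lambda g q)"
      using mult_cls[OF fsL FW_set FW_set] by simp
    also have "\<dots> = ?f X \<otimes>\<^bsub>RACG Lambda\<^esub> ?f Y"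
      using fmap_cls[OF p(1)] fmap_cls[OF q(1)] p(2) q(2) by simp
    finally show "?f (X \<otimes>\<^bsub>RACG Gamma\<^esub> Y) = ?f X \<otimes>\<^bsub>RACG Lambda\<^esub> ?f Y" .
  qed
  have inj: "inj_on ?f (carrier (RACG Gamma))"
  proof (rule inj_onI)
    fix X Y assume X: "X \<in> carrier (RACG Gamma)" and Y: "Y \<in> carrier (RACG Gamma)" and fe: "?f X = ?f Y"
    obtain p where p: "set p \<subseteq> verts Gamma" "X = cls Gamma p" using cr[OF X] by blast
    obtain q where q: "set q \<subseteq> verts Gamma" "Y = cls Gamma q" using cr[OF Y] by blast
    have "cls Lambda (FW Lambda g p) = cls Lambda (FW Lambda g q)"
      using fe fmap_cls[OF p(1)] fmap_cls[OF q(1)] p(2) q(2) by simp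
    then have c: "cls Lambda (FW Lambda g p @ []) = cls Lambda (FW Lambda g q)" by simp
    have "word_dist Lambda (cls Lambda (FW Lambda g p)) (cls Lambda (FW Lambda g q)) \<le> length ([] :: 'a list)"
      using wd_le[OF fsL FW_set _ c] by simp
    then have "word_dist Gamma (cls Gamma p) (cls Gamma q) = 0" using lower[OF p(1) q(1)] by simp
    moreover obtain w where w: "length w = word_dist Gamma (cls Gamma p) (cls Gamma q)"
      "cls Gamma (p @ w) = cls Gamma q"
      using wd_ex[OF fsG p(1) q(1)] by blast
    ultimately have "w = []" by simp
    then show "X = Y" using w(2) p(2) q(2) by simp
  qed
  have qi: "qi_embedding Gamma Lambda ?f"
    unfolding qi_embedding_def
  proof (intro exI conjI ballI)
    let ?K = "real (card (verts Lambda)) + 1"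
    show "?K \<ge> 1" by simp
    show "(0::real) \<le> 0" by simp
    fix X Y assume X: "X \<in> carrier (RACG Gamma)" and Y: "Y \<in> carrier (RACG Gamma)"
    obtain p where p: "set p \<subseteq> verts Gamma" "X = cls Gamma p" using cr[OF X] by blast
    obtain q where q: "set q \<subseteq> verts Gamma" "Y = cls Gamma q" using cr[OF Y] by blast
    define d where "d = word_dist Gamma X Y"
    define d' where "d' = word_dist Lambda (?f X) (?f Y)"
    have fX: "?f X = cls Lambda (FW Lambda g p)" using fmap_cls[OF p(1)] p(2) by simp
    have fY: "?f Y = cls Lambda (FW Lambda g q)" using fmap_cls[OF q(1)] q(2) by simp
    have l: "d \<le> d'" unfolding d_def d'_def p(2) q(2) fmap_cls[OF p(1)] fmap_cls[OF q(1)]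
      by (rule lower[OF p(1) q(1)])
    have u: "d' \<le> card (verts Lambda) * d"
      unfolding d_def d'_def p(2) q(2) fmap_cls[OF p(1)] fmap_cls[OF q(1)]
      by (rule upper[OF p(1) q(1)])
    have Kp: "?K > 0" by simp
    have "real d \<le> real d * ?K" by (simp add: algebra_simps)
    then have "real d / ?K \<le> real d" using Kp by (simp add: divide_le_eq)
    also have "\<dots> \<le> real d'" using l by simp
    finally show "real (word_dist Gamma X Y) / ?K - 0 \<le> real (word_dist Lambda (?f X) (?f Y))"
      unfolding d_def d'_def by simp
    have "real d' \<le> real (card (verts Lambda) * d)" using u by (rule of_nat_mono)
    also have "\<dots> = real (card (verts Lambda)) * real d" by simp
    also have "\<dots> \<le> ?K * real d" by (simp add: algebra_simps)
    finally show "real (word_dist Lambda (?f X) (?f Y)) \<le> ?K * real (word_dist Gamma X Y) + 0"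
      unfolding d_def d'_def by simp
  qed
  show ?thesis using hom inj qi by blast
qed


end
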